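(* Let $H(\mathbb{Z})=\langle a,b \mid [a,b]\text{ is central}\rangle$ be the integer Heisenberg group with generating set $S=\{a,b,a^{-1},b^{-1}\}$, and let $B_n$ be the ball of radius $n$ about $e$ in the word metric. There exists $\epsilon>0$ such that for all sufficiently large $n$, $$\epsilon<\frac{\#\{g\in B_n\smallsetminus\{e\}:\kappa(g)=0\}}{\#B_n}<1-\epsilon,$$ and the same two-sided bound holds with the condition $\kappa(g)=0$ replaced by $\kappa(g)>0$, and also with it replaced by $\kappa(g)<0$.
   Context: For a group $G$ with finite generating set $S$ ($S=S^{-1}$, $e\notin S$), $|x|$ denotes the word length of $x\in G$ with respect to $S$, and $B_n=\{g:|g|\le n\}$. For $g\in G$ define $\mathrm{Av}(g)=\frac{1}{|S|}\sum_{a\in S}|a^{-1}ga|$, and for $g\neq e$ define the curvature $\kappa(g)=\frac{|g|-\mathrm{Av}(g)}{|g|}$. *)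

theory Defs
  imports Complex_Main
begin

text \<open>Integer Heisenberg group, realised as upper unitriangular integer 3x3 matrices
  [[1,x,z],[0,1,y],[0,0,1]] encoded as triples (x,y,z).  This is the standard model of
  the presentation a,b with [a,b] central, via a = (1,0,0), b = (0,1,0).\<close>

type_synonym heis = "int \<times> int \<times> int"

definition hmul :: "heis \<Rightarrow> heis \<Rightarrow> heis" where
  "hmul g h = (case g of (x, y, z) \<Rightarrow> case h of (x', y', z') \<Rightarrow>
      (x + x', y + y', z + z' + x * y'))"

definition hone :: heis where "hone = (0, 0, 0)"

definition hinv :: "heis \<Rightarrow> heis" where
  "hinv g = (case g of (x, y, z) \<Rightarrow> (- x, - y, x * y - z))"

definition ha :: heis where "ha = (1, 0, 0)"
definition hb :: heis where "hb = (0, 1, 0)"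

definition hS :: "heis set" where
  "hS = {ha, hb, hinv ha, hinv hb}"

definition word_eval :: "heis list \<Rightarrow> heis" where
  "word_eval w = foldr hmul w hone"

definition wlen :: "heis \<Rightarrow> nat" where
  "wlen g = (LEAST n. \<exists>w. set w \<subseteq> hS \<and> length w = n \<and> word_eval w = g)"

definition ball :: "nat \<Rightarrow> heis set" where
  "ball n = {g. wlen g \<le> n}"

definition Av :: "heis \<Rightarrow> real" where
  "Av g = (\<Sum>s\<in>hS. real (wlen (hmul (hinv s) (hmul g s)))) / real (card hS)"

definition kappa :: "heis \<Rightarrow> real" where
  "kappa g = (real (wlen g) - Av g) / real (wlen g)"

end

theory Submission
  imports Defs
begin

lemma hmul_simp[simp]: "hmul (x,y,z) (x',y',z') = (x+x', y+y', z+z'+x*y')"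
  by (simp add: hmul_def)

lemma hmul_assoc: "hmul (hmul g h) k = hmul g (hmul h k)"
  by (cases g; cases h; cases k) (simp add: algebra_simps)

lemma hmul_one_left[simp]: "hmul hone g = g"
  by (cases g) (simp add: hone_def)

lemma hmul_one_right[simp]: "hmul g hone = g"
  by (cases g) (simp add: hone_def)

lemma hS_eq: "hS = {(1,0,0),(0,1,0),(-1,0,0),(0,-1,0)}"
  by (simp add: hS_def ha_def hb_def hinv_def)

lemma card_hS: "card hS = 4"
  by (simp add: hS_eq)

lemma we_Nil[simp]: "word_eval [] = hone" by (simp add: word_eval_def)
lemma we_Cons[simp]: "word_eval (s#w) = hmul s (word_eval w)" by (simp add: word_eval_def)
lemma we_append: "word_eval (u @ v) = hmul (word_eval u) (word_eval v)"
  by (induction u) (simp_all add: hmul_assoc)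

lemma we_rep_a: "word_eval (replicate k (1,0,0)) = (int k, 0, 0)"
  by (induction k) (simp_all add: hone_def)
lemma we_rep_b: "word_eval (replicate k (0,1,0)) = (0, int k, 0)"
  by (induction k) (simp_all add: hone_def)
lemma we_rep_ai: "word_eval (replicate k (-1,0,0)) = (- int k, 0, 0)"
  by (induction k) (simp_all add: hone_def)
lemma we_rep_bi: "word_eval (replicate k (0,-1,0)) = (0, - int k, 0)"
  by (induction k) (simp_all add: hone_def)

definition cw :: "heis list" where "cw = [(1,0,0),(0,1,0),(-1,0,0),(0,-1,0)]"
definition cwi :: "heis list" where "cwi = [(0,1,0),(1,0,0),(0,-1,0),(-1,0,0)]"

lemma we_cw: "word_eval (concat (replicate k cw)) = (0,0,int k)"
  by (induction k) (simp_all add: hone_def cw_def we_append)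
lemma we_cwi: "word_eval (concat (replicate k cwi)) = (0,0,- int k)"
  by (induction k) (simp_all add: hone_def cwi_def we_append)

definition reach :: "heis \<Rightarrow> heis list \<Rightarrow> bool" where
  "reach g w \<longleftrightarrow> set w \<subseteq> hS \<and> word_eval w = g"

lemma reach_all: "\<exists>w. reach g w"
proof -
  obtain x y z where g: "g = (x,y,z)" by (cases g) auto
  define wx where "wx = (if x \<ge> 0 then replicate (nat x) (1,0,0) else replicate (nat (-x)) (-1::int,0::int,0::int))"
  define wy where "wy = (if y \<ge> 0 then replicate (nat y) (0,1,0) else replicate (nat (-y)) (0::int,-1::int,0::int))"
  define c where "c = z - x*y"
  define wz where "wz = (if c \<ge> 0 then concat (replicate (nat c) cw) else concat (replicate (nat (-c)) cwi))"
  have ex: "word_eval wx = (x,0,0)" by (simp add: wx_def we_rep_a we_rep_ai)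
  have ey: "word_eval wy = (0,y,0)" by (simp add: wy_def we_rep_b we_rep_bi)
  have ez: "word_eval wz = (0,0,c)" by (simp add: wz_def we_cw we_cwi)
  have sx: "set wx \<subseteq> hS" by (auto simp: wx_def hS_eq)
  have sy: "set wy \<subseteq> hS" by (auto simp: wy_def hS_eq)
  have sz: "set wz \<subseteq> hS" by (auto simp: wz_def hS_eq cw_def cwi_def)
  have "word_eval (wx @ wy @ wz) = g" using ex ey ez by (simp add: we_append g c_def)
  moreover have "set (wx @ wy @ wz) \<subseteq> hS" using sx sy sz by auto
  ultimately show ?thesis unfolding reach_def by blast
qed

lemma wlen_witness: "\<exists>w. reach g w \<and> length w = wlen g"
proof -
  have "\<exists>n w. set w \<subseteq> hS \<and> length w = n \<and> word_eval w = g" using reach_all unfolding reach_def by blast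
  hence "\<exists>w. set w \<subseteq> hS \<and> length w = wlen g \<and> word_eval w = g"
    unfolding wlen_def by (rule LeastI_ex)
  thus ?thesis unfolding reach_def by blast
qed

lemma wlen_le: "reach g w \<Longrightarrow> wlen g \<le> length w"
  unfolding wlen_def reach_def by (rule Least_le) blast

definition WX :: "heis list \<Rightarrow> int" where "WX w = fst (word_eval w)"
definition WY :: "heis list \<Rightarrow> int" where "WY w = fst (snd (word_eval w))"
definition WZ :: "heis list \<Rightarrow> int" where "WZ w = snd (snd (word_eval w))"

lemma we_split: "word_eval w = (WX w, WY w, WZ w)" by (simp add: WX_def WY_def WZ_def)

lemma W_Nil[simp]: "WX [] = 0" "WY [] = 0" "WZ [] = 0" by (simp_all add: WX_def WY_def WZ_def hone_def)

lemma W_Cons[simp]: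
  "WX ((dx,dy,0)#w) = dx + WX w"
  "WY ((dx,dy,0)#w) = dy + WY w"
  "WZ ((dx,dy,0)#w) = WZ w + dx * WY w"
  by (cases "word_eval w"; simp add: WX_def WY_def WZ_def)+

lemma gen_cases: "s \<in> hS \<Longrightarrow> s = (1,0,0) \<or> s = (0,1,0) \<or> s = (-1,0,0) \<or> s = (0,-1,0)"
  by (auto simp: hS_eq)

fun na :: "heis list \<Rightarrow> nat" where
  "na [] = 0" | "na (s#w) = (if fst s \<noteq> 0 then 1 else 0) + na w"
fun nb :: "heis list \<Rightarrow> nat" where
  "nb [] = 0" | "nb (s#w) = (if fst (snd s) \<noteq> 0 then 1 else 0) + nb w"
fun ylo :: "heis list \<Rightarrow> int" where
  "ylo [] = 0" | "ylo (s#w) = min (WY (s#w)) (ylo w)"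
fun yhi :: "heis list \<Rightarrow> int" where
  "yhi [] = 0" | "yhi (s#w) = max (WY (s#w)) (yhi w)"

lemma basic:
  assumes "set w \<subseteq> hS"
  shows "\<bar>WX w\<bar> + \<bar>WY w\<bar> \<le> int (length w) \<and> even (int (length w) + WX w + WY w)
    \<and> \<bar>WZ w\<bar> \<le> int (length w)^2 \<and> na w + nb w = length w"
  using assms
proof (induction w)
  case Nil thus ?case by simp
next
  case (Cons s w)
  have sw: "set w \<subseteq> hS" using Cons.prems by simp
  note C = Cons.IH[OF sw]
  have IH1: "\<bar>WX w\<bar> + \<bar>WY w\<bar> \<le> int (length w)" using C by (rule conjunct1)
  have IH2: "even (int (length w) + WX w + WY w)" using C[THEN conjunct2, THEN conjunct1] .
  have IH3: "\<bar>WZ w\<bar> \<le> int (length w)^2" using C[THEN conjunct2, THEN conjunct2, THEN conjunct1] .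
  have IH4: "na w + nb w = length w" using C[THEN conjunct2, THEN conjunct2, THEN conjunct2] .
  note IH = IH1 IH2 IH3 IH4
  have yb: "\<bar>WY w\<bar> \<le> int (length w)" using IH(1) by linarith
  have sq: "int (length w)^2 + int (length w) \<le> (int (length w) + 1)^2" by (simp add: power2_eq_square algebra_simps)
  have s: "s = (1,0,0) \<or> s = (0,1,0) \<or> s = (-1,0,0) \<or> s = (0,-1,0)" using Cons.prems gen_cases by auto
  from s show ?case
  proof (elim disjE)
    assume h: "s = (1,0,0)"
    have eX: "WX (s#w) = WX w + 1" and eY: "WY (s#w) = WY w" and eZ: "WZ (s#w) = WZ w + WY w"
      and eA: "na (s#w) = na w + 1" and eB: "nb (s#w) = nb w" using h by simp_all
    have L: "int (length (s#w)) = int (length w) + 1" by simp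
    have p: "int (length (s#w)) + WX (s#w) + WY (s#w) = (int (length w) + WX w + WY w) + 2"
      unfolding eX eY L by simp
    have f1: "even (int (length (s#w)) + WX (s#w) + WY (s#w))" unfolding p using IH(2) by simp
    have f2: "\<bar>WX (s#w)\<bar> + \<bar>WY (s#w)\<bar> \<le> int (length (s#w))" unfolding eX eY L using IH(1) by linarith
    have f3: "\<bar>WZ (s#w)\<bar> \<le> int (length (s#w))^2" unfolding eZ L using IH(3) yb sq by linarith
    have f4: "na (s#w) + nb (s#w) = length (s#w)" unfolding eA eB using IH(4) by simp
    show ?case by (intro conjI f1 f2 f3 f4)
  next
    assume h: "s = (0,1,0)"
    have eX: "WX (s#w) = WX w" and eY: "WY (s#w) = WY w + 1" and eZ: "WZ (s#w) = WZ w"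
      and eA: "na (s#w) = na w" and eB: "nb (s#w) = nb w + 1" using h by simp_all
    have L: "int (length (s#w)) = int (length w) + 1" by simp
    have p: "int (length (s#w)) + WX (s#w) + WY (s#w) = (int (length w) + WX w + WY w) + 2"
      unfolding eX eY L by simp
    have f1: "even (int (length (s#w)) + WX (s#w) + WY (s#w))" unfolding p using IH(2) by simp
    have f2: "\<bar>WX (s#w)\<bar> + \<bar>WY (s#w)\<bar> \<le> int (length (s#w))" unfolding eX eY L using IH(1) by linarith
    have f3: "\<bar>WZ (s#w)\<bar> \<le> int (length (s#w))^2" unfolding eZ L using IH(3) yb sq by linarith
    have f4: "na (s#w) + nb (s#w) = length (s#w)" unfolding eA eB using IH(4) by simp
    show ?case by (intro conjI f1 f2 f3 f4)
  next
    assume h: "s = (-1,0,0)"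
    have eX: "WX (s#w) = WX w - 1" and eY: "WY (s#w) = WY w" and eZ: "WZ (s#w) = WZ w - WY w"
      and eA: "na (s#w) = na w + 1" and eB: "nb (s#w) = nb w" using h by simp_all
    have L: "int (length (s#w)) = int (length w) + 1" by simp
    have p: "int (length (s#w)) + WX (s#w) + WY (s#w) = (int (length w) + WX w + WY w) + 0"
      unfolding eX eY L by simp
    have f1: "even (int (length (s#w)) + WX (s#w) + WY (s#w))" unfolding p using IH(2) by simp
    have f2: "\<bar>WX (s#w)\<bar> + \<bar>WY (s#w)\<bar> \<le> int (length (s#w))" unfolding eX eY L using IH(1) by linarith
    have f3: "\<bar>WZ (s#w)\<bar> \<le> int (length (s#w))^2" unfolding eZ L using IH(3) yb sq by linarith
    have f4: "na (s#w) + nb (s#w) = length (s#w)" unfolding eA eB using IH(4) by simp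
    show ?case by (intro conjI f1 f2 f3 f4)
  next
    assume h: "s = (0,-1,0)"
    have eX: "WX (s#w) = WX w" and eY: "WY (s#w) = WY w - 1" and eZ: "WZ (s#w) = WZ w"
      and eA: "na (s#w) = na w" and eB: "nb (s#w) = nb w + 1" using h by simp_all
    have L: "int (length (s#w)) = int (length w) + 1" by simp
    have p: "int (length (s#w)) + WX (s#w) + WY (s#w) = (int (length w) + WX w + WY w) + 0"
      unfolding eX eY L by simp
    have f1: "even (int (length (s#w)) + WX (s#w) + WY (s#w))" unfolding p using IH(2) by simp
    have f2: "\<bar>WX (s#w)\<bar> + \<bar>WY (s#w)\<bar> \<le> int (length (s#w))" unfolding eX eY L using IH(1) by linarith
    have f3: "\<bar>WZ (s#w)\<bar> \<le> int (length (s#w))^2" unfolding eZ L using IH(3) yb sq by linarith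
    have f4: "na (s#w) + nb (s#w) = length (s#w)" unfolding eA eB using IH(4) by simp
    show ?case by (intro conjI f1 f2 f3 f4)
  qed
qed

lemma yrange:
  assumes "set w \<subseteq> hS"
  shows "ylo w \<le> 0 \<and> 0 \<le> yhi w \<and> ylo w \<le> WY w \<and> WY w \<le> yhi w \<and> 2*(yhi w - ylo w) \<le> int (nb w) + \<bar>WY w\<bar>"
  using assms
proof (induction w)
  case Nil thus ?case by simp
next
  case (Cons s w)
  have sw: "set w \<subseteq> hS" using Cons.prems by simp
  note C = Cons.IH[OF sw]
  have I1: "ylo w \<le> 0" using C by (rule conjunct1)
  have I2: "0 \<le> yhi w" using C[THEN conjunct2, THEN conjunct1] .
  have I3: "ylo w \<le> WY w" using C[THEN conjunct2, THEN conjunct2, THEN conjunct1] .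
  have I4: "WY w \<le> yhi w" using C[THEN conjunct2, THEN conjunct2, THEN conjunct2, THEN conjunct1] .
  have I5: "2*(yhi w - ylo w) \<le> int (nb w) + \<bar>WY w\<bar>" using C[THEN conjunct2, THEN conjunct2, THEN conjunct2, THEN conjunct2] .
  have s: "s = (1,0,0) \<or> s = (0,1,0) \<or> s = (-1,0,0) \<or> s = (0,-1,0)" using Cons.prems gen_cases by auto
  have lo: "ylo (s#w) = min (WY (s#w)) (ylo w)" and hi: "yhi (s#w) = max (WY (s#w)) (yhi w)" by simp_all
  from s show ?case
  proof (elim disjE)
    assume h: "s = (1,0,0)"
    have eY: "WY (s#w) = WY w" and eB: "nb (s#w) = nb w" using h by simp_all
    have "min (WY w) (ylo w) = ylo w" "max (WY w) (yhi w) = yhi w" using I3 I4 by (simp_all add: min_absorb2 max_absorb2)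
    thus ?case unfolding lo hi eY eB using I1 I2 I3 I4 I5 by simp
  next
    assume h: "s = (-1,0,0)"
    have eY: "WY (s#w) = WY w" and eB: "nb (s#w) = nb w" using h by simp_all
    have "min (WY w) (ylo w) = ylo w" "max (WY w) (yhi w) = yhi w" using I3 I4 by (simp_all add: min_absorb2 max_absorb2)
    thus ?case unfolding lo hi eY eB using I1 I2 I3 I4 I5 by simp
  next
    assume h: "s = (0,1,0)"
    have eY: "WY (s#w) = WY w + 1" and eB: "int (nb (s#w)) = int (nb w) + 1" using h by simp_all
    show ?case unfolding lo hi eY eB using I1 I2 I3 I4 I5 by (simp add: min_def max_def abs_if split: if_splits; arith)
  next
    assume h: "s = (0,-1,0)"
    have eY: "WY (s#w) = WY w - 1" and eB: "int (nb (s#w)) = int (nb w) + 1" using h by simp_all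
    show ?case unfolding lo hi eY eB using I1 I2 I3 I4 I5 by (simp add: min_def max_def abs_if split: if_splits; arith)
  qed
qed

lemma zbound:
  assumes "set w \<subseteq> hS" "lo \<le> ylo w" "yhi w \<le> hi"
  shows "\<bar>2 * WZ w - (lo + hi) * WX w\<bar> \<le> int (na w) * (hi - lo)"
  using assms
proof (induction w)
  case Nil thus ?case by simp
next
  case (Cons s w)
  have sw: "set w \<subseteq> hS" using Cons.prems by simp
  have lo1: "lo \<le> ylo w" and hi1: "yhi w \<le> hi" using Cons.prems(2,3) by simp_all
  have IH: "\<bar>2 * WZ w - (lo + hi) * WX w\<bar> \<le> int (na w) * (hi - lo)" using Cons.IH[OF sw lo1 hi1] .
  have R: "ylo w \<le> WY w \<and> WY w \<le> yhi w" using yrange[OF sw] by linarith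
  have s: "s = (1,0,0) \<or> s = (0,1,0) \<or> s = (-1,0,0) \<or> s = (0,-1,0)" using Cons.prems gen_cases by auto
  have m: "int (na w + 1) * (hi - lo) = int (na w) * (hi - lo) + (hi - lo)" by (simp add: algebra_simps)
  from s show ?case
  proof (elim disjE)
    assume h: "s = (1,0,0)"
    have e: "2 * WZ (s#w) - (lo + hi) * WX (s#w) = (2 * WZ w - (lo + hi) * WX w) + (2 * WY w - lo - hi)"
      using h by (simp add: algebra_simps)
    have eA: "na (s#w) = na w + 1" using h by simp
    show ?case unfolding e eA m using IH R lo1 hi1 by linarith
  next
    assume h: "s = (-1,0,0)"
    have e: "2 * WZ (s#w) - (lo + hi) * WX (s#w) = (2 * WZ w - (lo + hi) * WX w) - (2 * WY w - lo - hi)"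
      using h by (simp add: algebra_simps)
    have eA: "na (s#w) = na w + 1" using h by simp
    show ?case unfolding e eA m using IH R lo1 hi1 by linarith
  next
    assume h: "s = (0,1,0)"
    have e: "2 * WZ (s#w) - (lo + hi) * WX (s#w) = (2 * WZ w - (lo + hi) * WX w)"
      using h by (simp add: algebra_simps)
    have eA: "na (s#w) = na w" using h by simp
    show ?case unfolding e eA using IH by linarith
  next
    assume h: "s = (0,-1,0)"
    have e: "2 * WZ (s#w) - (lo + hi) * WX (s#w) = (2 * WZ w - (lo + hi) * WX w)"
      using h by (simp add: algebra_simps)
    have eA: "na (s#w) = na w" using h by simp
    show ?case unfolding e eA using IH by linarith
  qed
qed

lemma iso:
  assumes "set w \<subseteq> hS" "word_eval w = (x,y,z)" "x \<ge> 0" "y \<ge> 0"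
  shows "16 * z \<le> (int (length w) + x + y)^2"
proof -
  have X: "WX w = x" and Y: "WY w = y" and Z: "WZ w = z" using assms(2) by (simp_all add: WX_def WY_def WZ_def)
  define lo where "lo = ylo w"
  define hi where "hi = yhi w"
  define W where "W = hi - lo"
  have R: "lo \<le> 0" "0 \<le> hi" "2 * W \<le> int (nb w) + y"
    using yrange[OF assms(1)] Y assms(4) unfolding lo_def hi_def W_def by auto
  have zb: "\<bar>2 * z - (lo + hi) * x\<bar> \<le> int (na w) * W"
    using zbound[OF assms(1), of lo hi] X Z unfolding lo_def hi_def W_def by simp
  have W0: "W \<ge> 0" unfolding W_def using R by simp
  have "(lo + hi) * x \<le> W * x" using R assms(3) unfolding W_def by (intro mult_right_mono) auto
  hence z1: "2 * z \<le> W * (x + int (na w))" using zb by (simp add: algebra_simps abs_le_iff)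
  have "(2 * W) * (x + int (na w)) \<le> (int (nb w) + y) * (x + int (na w))"
    using R(3) assms(3) by (intro mult_right_mono) auto
  hence z2: "4 * z \<le> (int (nb w) + y) * (x + int (na w))" using z1 by linarith
  have L: "int (length w) = int (na w) + int (nb w)" using basic[OF assms(1)] by simp
  have "4 * ((int (nb w) + y) * (x + int (na w))) \<le> (int (length w) + x + y)^2"
  proof -
    have "0 \<le> ((int (nb w) + y) - (x + int (na w)))^2" by simp
    thus ?thesis unfolding L by (simp add: power2_eq_square algebra_simps)
  qed
  thus ?thesis using z2 by linarith
qed

lemma low:
  assumes "x \<ge> 0" "y \<ge> 0" "(s - 1)^2 < 4 * z"
  shows "2 * s - x - y \<le> int (wlen (x,y,z))"
proof (rule ccontr)
  assume nc: "\<not> ?thesis"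
  obtain w where w: "reach (x,y,z) w" "length w = wlen (x,y,z)" using wlen_witness by blast
  have sw: "set w \<subseteq> hS" and ev: "word_eval w = (x,y,z)" using w(1) unfolding reach_def by auto
  have "even (int (length w) + WX w + WY w)" using basic[OF sw] by blast
  moreover have "WX w = x" "WY w = y" using ev by (simp_all add: WX_def WY_def)
  ultimately have e: "even (int (length w) + x + y)" by simp
  define m where "m = int (length w) + x + y"
  have m0: "0 \<le> m" unfolding m_def using assms by simp
  have ml: "m < 2 * s" using nc w(2) unfolding m_def by linarith
  from e obtain k where "int (length w) + x + y = 2 * k" by (rule evenE)
  hence k: "m = 2 * k" unfolding m_def by simp
  have m2: "m \<le> 2 * s - 2" using ml k by presburger
  have "m^2 \<le> (2 * s - 2)^2" using m0 m2 by (intro power_mono) auto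
  moreover have "16 * z \<le> m^2" unfolding m_def by (rule iso[OF sw ev assms(1,2)])
  moreover have "(2 * s - 2)^2 = 4 * (s - 1)^2" by (simp add: power2_eq_square algebra_simps)
  ultimately show False using assms(3) by linarith
qed

lemma window:
  fixes p q :: nat
  assumes "0 \<le> z" "z \<le> int p * int q"
  shows "\<exists>w. set w \<subseteq> hS \<and> length w = p + q \<and> word_eval w = (int p, int q, z)"
proof (cases "q = 0 \<or> z = int p * int q")
  case True
  let ?w = "replicate p (1,0,0) @ replicate q (0,1,0)"
  have "word_eval ?w = (int p, int q, int p * int q)" by (simp add: we_append we_rep_a we_rep_b)
  moreover have "set ?w \<subseteq> hS" by (auto simp: hS_eq)
  moreover have "z = int p * int q" using True assms by auto
  ultimately show ?thesis by (intro exI[of _ ?w]) simp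
next
  case False
  hence q0: "q > 0" and zl: "z < int p * int q" using assms by auto
  define k where "k = z div int q"
  define r where "r = z mod int q"
  have zkr: "z = k * int q + r" unfolding k_def r_def by simp
  have r0: "0 \<le> r" "r < int q" unfolding r_def using q0 by auto
  have k0: "0 \<le> k" unfolding k_def using assms q0 by (simp add: pos_imp_zdiv_nonneg_iff)
  have kp: "k < int p"
  proof (rule ccontr)
    assume "\<not> k < int p"
    hence "int p * int q \<le> k * int q" using q0 by (intro mult_right_mono) auto
    thus False using zkr r0 zl by linarith
  qed
  define w :: "heis list" where "w = replicate (nat k) (1,0,0) @ replicate (nat (int q - r)) (0,1,0) @ [(1,0,0)]
     @ replicate (nat r) (0,1,0) @ replicate (nat (int p - k - 1)) (1,0,0)"
  have "word_eval w = (k + (int q - r) * 0 + 1 + 0 + (int p - k - 1), int q, k * (int q - r) + (k + 1) * r)"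
    unfolding w_def using k0 r0 kp by (simp add: we_append we_rep_a we_rep_b hone_def algebra_simps)
  also have "\<dots> = (int p, int q, z)" unfolding zkr by (simp add: algebra_simps)
  finally have ev: "word_eval w = (int p, int q, z)" .
  have "set w \<subseteq> hS" unfolding w_def by (auto simp: hS_eq)
  moreover have "length w = p + q" unfolding w_def using k0 r0 kp by simp
  ultimately show ?thesis using ev by blast
qed

lemma up:
  assumes "x \<ge> 0" "y \<ge> 0" "s - x - y \<ge> \<bar>x - y\<bar>" "0 \<le> z" "4 * z \<le> s^2"
  shows "int (wlen (x,y,z)) \<le> 2 * s - x - y"
proof -
  define h where "h = s div 2"
  have h: "2 * h \<le> s" "s \<le> 2 * h + 1" unfolding h_def by auto
  obtain p q where pq: "p + q = s" "\<bar>p - q\<bar> \<le> 1" "p \<ge> x" "q \<ge> y"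
  proof (cases "x \<le> y")
    case True
    show ?thesis by (rule that[of h "s - h"]) (use h assms True in auto)
  next
    case False
    show ?thesis by (rule that[of "s - h" h]) (use h assms False in auto)
  qed
  have "s^2 - 1 \<le> 4 * (p * q)"
  proof -
    have "(p - q)^2 \<le> 1" using pq(2) by (simp add: abs_square_le_1)
    moreover have "s^2 = 4 * (p * q) + (p - q)^2" unfolding pq(1)[symmetric] by (simp add: power2_eq_square algebra_simps)
    ultimately show ?thesis by linarith
  qed
  hence zpq: "z \<le> p * q" using assms(5) by linarith
  have p0: "p \<ge> 0" "q \<ge> 0" using pq assms by auto
  obtain w0 where w0: "set w0 \<subseteq> hS" "length w0 = nat p + nat q" "word_eval w0 = (p, q, z)"
    using window[of z "nat p" "nat q"] zpq p0 assms(4) by auto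
  define w :: "heis list" where "w = replicate (nat (q - y)) (0,-1,0) @ w0 @ replicate (nat (p - x)) (-1,0,0)"
  have "word_eval w = (x,y,z)" unfolding w_def using pq p0
    by (simp add: we_append we_rep_ai we_rep_bi w0(3))
  moreover have "set w \<subseteq> hS" unfolding w_def using w0(1) by (auto simp: hS_eq)
  ultimately have "wlen (x,y,z) \<le> length w" by (intro wlen_le) (simp add: reach_def)
  moreover have "int (length w) = 2 * s - x - y" unfolding w_def using w0(2) pq p0 by simp
  ultimately show ?thesis by linarith
qed

lemma Av_eq: "Av (x,y,z) = (real (wlen (x,y,z-y)) + real (wlen (x,y,z+y)) + real (wlen (x,y,z+x)) + real (wlen (x,y,z-x))) / 4"
proof -
  show ?thesis unfolding Av_def card_hS hS_eq by (simp add: hinv_def algebra_simps)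
qed

lemma kappa_pos:
  assumes "0 < wlen g" "Av g < real (wlen g)" shows "kappa g > 0"
  using assms unfolding kappa_def by (simp add: divide_pos_pos)
lemma kappa_neg:
  assumes "0 < wlen g" "Av g > real (wlen g)" shows "kappa g < 0"
  using assms unfolding kappa_def by (simp add: divide_neg_pos)
lemma kappa_zero:
  assumes "Av g = real (wlen g)" shows "kappa g = 0"
  using assms unfolding kappa_def by simp

lemma sq_big: assumes "t \<ge> 2" "s \<ge> 11 * t" shows "(s - 1)^2 \<ge> 40 * (t::int)"
proof -
  have "(s - 1)^2 = (s - 1) * (s - 1)" by (simp add: power2_eq_square)
  also have "\<dots> \<ge> 20 * (s - 1)" using assms by (intro mult_right_mono) auto
  moreover have "20 * (s - 1) \<ge> 40 * t" using assms unfolding ring_distribs by linarith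
  ultimately show ?thesis by linarith
qed

definition zP :: "int \<Rightarrow> int \<Rightarrow> int" where "zP s j = (s - 1)^2 div 4 + 1 + j"
definition zM :: "int \<Rightarrow> int \<Rightarrow> int" where "zM s j = s^2 div 4 - j"
definition zZ :: "int \<Rightarrow> int \<Rightarrow> int \<Rightarrow> int" where "zZ t s j = (s - 1)^2 div 4 + 2 * t + 1 + j"

locale fam =
  fixes t x y s j :: int
  assumes t2: "t \<ge> 2" and xr: "t \<le> x" "x \<le> 2 * t" and yr: "t \<le> y" "y \<le> 2 * t"
    and sr: "11 * t \<le> s" "s \<le> 12 * t - 1" and jr: "0 \<le> j" "j \<le> t - 2"
begin

lemma basics:
  "x \<ge> 0" "y \<ge> 0" "s - x - y \<ge> \<bar>x - y\<bar>" "(s - 1) - x - y \<ge> \<bar>x - y\<bar>"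
  "(s - 1)^2 = s^2 - 2 * s + 1" "(s + 1)^2 = s^2 + 2 * s + 1" "(s - 1 - 1)^2 = s^2 - 4 * s + 4"
  "(s - 1)^2 \<ge> 40 * t" "s^2 \<ge> 40 * t"
  "4 * ((s - 1)^2 div 4) \<le> (s - 1)^2" "(s - 1)^2 \<le> 4 * ((s - 1)^2 div 4) + 3"
  "4 * (s^2 div 4) \<le> s^2" "s^2 \<le> 4 * (s^2 div 4) + 3"
  "0 < 2 * s - x - y"
proof -
  show "x \<ge> 0" "y \<ge> 0" "s - x - y \<ge> \<bar>x - y\<bar>" "(s - 1) - x - y \<ge> \<bar>x - y\<bar>" "0 < 2 * s - x - y"
    using t2 xr yr sr by auto
  show "(s - 1)^2 = s^2 - 2 * s + 1" "(s + 1)^2 = s^2 + 2 * s + 1" "(s - 1 - 1)^2 = s^2 - 4 * s + 4"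
    by (simp_all add: power2_eq_square algebra_simps)
  show a: "(s - 1)^2 \<ge> 40 * t" using sq_big t2 sr by auto
  have "(s - 1)^2 \<le> s^2" using sr t2 by (intro power_mono) auto
  thus "s^2 \<ge> 40 * t" using a by linarith
  show "4 * ((s - 1)^2 div 4) \<le> (s - 1)^2" "(s - 1)^2 \<le> 4 * ((s - 1)^2 div 4) + 3"
    "4 * (s^2 div 4) \<le> s^2" "s^2 \<le> 4 * (s^2 div 4) + 3" by auto
qed

lemma P:
  defines "z \<equiv> zP s j"
  shows "int (wlen (x,y,z)) \<le> 2 * s - x - y" "kappa (x,y,z) > 0" "(s - 1)^2 < 4 * z" "4 * z \<le> s^2"
proof -
  note b = basics
  have ze: "4 * z = 4 * ((s - 1)^2 div 4) + 4 + 4 * j" unfolding z_def zP_def by simp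
  show l1: "(s - 1)^2 < 4 * z" "4 * z \<le> s^2" unfolding ze using b jr sr t2 by linarith+
  have L: "2 * s - x - y \<le> int (wlen (x,y,z))" by (rule low[OF b(1,2) l1(1)])
  have z0: "0 \<le> z" using b ze jr by linarith
  show U: "int (wlen (x,y,z)) \<le> 2 * s - x - y" by (rule up[OF b(1,2,3) z0 l1(2)])
  have c1: "int (wlen (x,y,z-y)) \<le> 2 * (s - 1) - x - y"
    by (rule up[OF b(1,2,4)]) (use b jr yr xr t2 ze in \<open>unfold ring_distribs, linarith+\<close>)
  have c2: "int (wlen (x,y,z-x)) \<le> 2 * (s - 1) - x - y"
    by (rule up[OF b(1,2,4)]) (use b jr yr xr t2 ze in \<open>unfold ring_distribs, linarith+\<close>)
  have c3: "int (wlen (x,y,z+y)) \<le> 2 * s - x - y"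
    by (rule up[OF b(1,2,3)]) (use b jr yr xr t2 sr ze in \<open>unfold ring_distribs, linarith+\<close>)
  have c4: "int (wlen (x,y,z+x)) \<le> 2 * s - x - y"
    by (rule up[OF b(1,2,3)]) (use b jr yr xr t2 sr ze in \<open>unfold ring_distribs, linarith+\<close>)
  have "4 * Av (x,y,z) < 4 * real (wlen (x,y,z))"
  proof -
    have "int (wlen (x,y,z-y)) + int (wlen (x,y,z+y)) + int (wlen (x,y,z+x)) + int (wlen (x,y,z-x)) < 4 * int (wlen (x,y,z))"
      using c1 c2 c3 c4 L unfolding ring_distribs by linarith
    hence "real (wlen (x,y,z-y)) + real (wlen (x,y,z+y)) + real (wlen (x,y,z+x)) + real (wlen (x,y,z-x)) < 4 * real (wlen (x,y,z))"
      by linarith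
    thus ?thesis unfolding Av_eq by simp
  qed
  moreover have "0 < wlen (x,y,z)" using L b by linarith
  ultimately show "kappa (x,y,z) > 0" by (intro kappa_pos) auto
qed

lemma M:
  defines "z \<equiv> zM s j"
  shows "int (wlen (x,y,z)) \<le> 2 * s - x - y" "kappa (x,y,z) < 0" "(s - 1)^2 < 4 * z" "4 * z \<le> s^2"
proof -
  note b = basics
  have ze: "4 * z = 4 * (s^2 div 4) - 4 * j" unfolding z_def zM_def by simp
  show l1: "(s - 1)^2 < 4 * z" "4 * z \<le> s^2" unfolding ze using b jr sr t2 by linarith+
  have L: "2 * s - x - y \<le> int (wlen (x,y,z))" by (rule low[OF b(1,2) l1(1)])
  have z0: "0 \<le> z" using b ze jr by linarith
  show U: "int (wlen (x,y,z)) \<le> 2 * s - x - y" by (rule up[OF b(1,2,3) z0 l1(2)])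
  have ss: "(s + 1 - 1)^2 = s^2" by simp
  have c1: "2 * (s + 1) - x - y \<le> int (wlen (x,y,z+y))"
    by (rule low[OF b(1,2)]) (use b jr yr xr t2 ze ss in \<open>unfold ring_distribs, linarith\<close>)
  have c2: "2 * (s + 1) - x - y \<le> int (wlen (x,y,z+x))"
    by (rule low[OF b(1,2)]) (use b jr yr xr t2 ze ss in \<open>unfold ring_distribs, linarith\<close>)
  have c3: "2 * s - x - y \<le> int (wlen (x,y,z-y))"
    by (rule low[OF b(1,2)]) (use b jr yr xr t2 sr ze in \<open>unfold ring_distribs, linarith\<close>)
  have c4: "2 * s - x - y \<le> int (wlen (x,y,z-x))"
    by (rule low[OF b(1,2)]) (use b jr yr xr t2 sr ze in \<open>unfold ring_distribs, linarith\<close>)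
  have "4 * Av (x,y,z) > 4 * real (wlen (x,y,z))"
  proof -
    have "int (wlen (x,y,z-y)) + int (wlen (x,y,z+y)) + int (wlen (x,y,z+x)) + int (wlen (x,y,z-x)) > 4 * int (wlen (x,y,z))"
      using c1 c2 c3 c4 U unfolding ring_distribs by linarith
    hence "real (wlen (x,y,z-y)) + real (wlen (x,y,z+y)) + real (wlen (x,y,z+x)) + real (wlen (x,y,z-x)) > 4 * real (wlen (x,y,z))"
      by linarith
    thus ?thesis unfolding Av_eq by simp
  qed
  moreover have "0 < wlen (x,y,z)" using L b by linarith
  ultimately show "kappa (x,y,z) < 0" by (intro kappa_neg) auto
qed

lemma Z:
  defines "z \<equiv> zZ t s j"
  shows "int (wlen (x,y,z)) \<le> 2 * s - x - y" "kappa (x,y,z) = 0" "(s - 1)^2 < 4 * z" "4 * z \<le> s^2"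
proof -
  note b = basics
  have ze: "4 * z = 4 * ((s - 1)^2 div 4) + 8 * t + 4 + 4 * j" unfolding z_def zZ_def by simp
  show l1: "(s - 1)^2 < 4 * z" "4 * z \<le> s^2" unfolding ze using b jr sr t2 by linarith+
  have L: "2 * s - x - y \<le> int (wlen (x,y,z))" by (rule low[OF b(1,2) l1(1)])
  have z0: "0 \<le> z" using b ze jr by linarith
  show U: "int (wlen (x,y,z)) \<le> 2 * s - x - y" by (rule up[OF b(1,2,3) z0 l1(2)])
  have c1: "2 * s - x - y \<le> int (wlen (x,y,z+y))"
    by (rule low[OF b(1,2)]) (use b jr yr xr t2 ze in \<open>unfold ring_distribs, linarith\<close>)
  have c2: "2 * s - x - y \<le> int (wlen (x,y,z+x))"
    by (rule low[OF b(1,2)]) (use b jr yr xr t2 ze in \<open>unfold ring_distribs, linarith\<close>)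
  have c3: "2 * s - x - y \<le> int (wlen (x,y,z-y))"
    by (rule low[OF b(1,2)]) (use b jr yr xr t2 sr ze in \<open>unfold ring_distribs, linarith\<close>)
  have c4: "2 * s - x - y \<le> int (wlen (x,y,z-x))"
    by (rule low[OF b(1,2)]) (use b jr yr xr t2 sr ze in \<open>unfold ring_distribs, linarith\<close>)
  have d1: "int (wlen (x,y,z+y)) \<le> 2 * s - x - y"
    by (rule up[OF b(1,2,3)]) (use b jr yr xr t2 sr ze in \<open>unfold ring_distribs, linarith+\<close>)
  have d2: "int (wlen (x,y,z+x)) \<le> 2 * s - x - y"
    by (rule up[OF b(1,2,3)]) (use b jr yr xr t2 sr ze in \<open>unfold ring_distribs, linarith+\<close>)
  have d3: "int (wlen (x,y,z-y)) \<le> 2 * s - x - y"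
    by (rule up[OF b(1,2,3)]) (use b jr yr xr t2 sr ze in \<open>unfold ring_distribs, linarith+\<close>)
  have d4: "int (wlen (x,y,z-x)) \<le> 2 * s - x - y"
    by (rule up[OF b(1,2,3)]) (use b jr yr xr t2 sr ze in \<open>unfold ring_distribs, linarith+\<close>)
  have "wlen (x,y,z+y) = wlen (x,y,z)" "wlen (x,y,z+x) = wlen (x,y,z)"
    "wlen (x,y,z-y) = wlen (x,y,z)" "wlen (x,y,z-x) = wlen (x,y,z)"
    using c1 c2 c3 c4 d1 d2 d3 d4 L U by linarith+
  thus "kappa (x,y,z) = 0" by (intro kappa_zero) (simp add: Av_eq)
qed

end

lemma level_unique:
  fixes s s' z :: int
  assumes "s \<ge> 1" "s' \<ge> 1" "(s - 1)^2 < 4 * z" "4 * z \<le> s^2" "(s' - 1)^2 < 4 * z" "4 * z \<le> s'^2"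
  shows "s = s'"
proof (rule ccontr)
  assume "s \<noteq> s'"
  then consider "s < s'" | "s' < s" by linarith
  thus False
  proof cases
    case 1
    hence "s^2 \<le> (s' - 1)^2" using assms by (intro power_mono) auto
    thus False using assms by linarith
  next
    case 2
    hence "s'^2 \<le> (s - 1)^2" using assms by (intro power_mono) auto
    thus False using assms by linarith
  qed
qed

definition Dom :: "int \<Rightarrow> (int \<times> int \<times> int \<times> int) set" where
  "Dom t = {t..2*t} \<times> {t..2*t} \<times> {11*t..12*t-1} \<times> {0..t-2}"

lemma card_Dom: "t \<ge> 2 \<Longrightarrow> real_of_int t ^ 4 \<le> real (card (Dom t))"
proof -
  assume t: "t \<ge> 2"
  have c: "int (card (Dom t)) = (t + 1) * ((t + 1) * (t * (t - 1)))"
    unfolding Dom_def using t by (simp add: card_cartesian_product)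
  have a: "t * t \<ge> 2 * t" using t by (intro mult_right_mono) auto
  have b: "0 \<le> t * (t * t - t - 1)" using t a by (intro mult_nonneg_nonneg) auto
  have "(t + 1) * ((t + 1) * (t * (t - 1))) = t^4 + t * (t * t - t - 1)"
    by (simp add: power4_eq_xxxx algebra_simps)
  hence "t^4 \<le> int (card (Dom t))" using c b by linarith
  hence "real_of_int (t^4) \<le> real_of_int (int (card (Dom t)))" by linarith
  thus ?thesis by simp
qed

lemma count:
  fixes F :: "int \<Rightarrow> int \<Rightarrow> int"
  assumes fin: "finite A" and t: "t \<ge> 2"
    and mem: "\<And>x y s j. (x,y,s,j) \<in> Dom t \<Longrightarrow> (x,y,F s j) \<in> A \<and> (s - 1)^2 < 4 * F s j \<and> 4 * F s j \<le> s^2"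
    and inj: "\<And>s j j'. F s j = F s j' \<Longrightarrow> j = j'"
  shows "real_of_int t ^ 4 \<le> real (card A)"
proof -
  define \<phi> where "\<phi> = (\<lambda>(x::int,y::int,s::int,j::int). (x,y,F s j))"
  have "inj_on \<phi> (Dom t)"
  proof (rule inj_onI)
    fix a b assume a: "a \<in> Dom t" and b: "b \<in> Dom t" and e: "\<phi> a = \<phi> b"
    obtain x y s j where av: "a = (x,y,s,j)" by (cases a) auto
    obtain x' y' s' j' where bv: "b = (x',y',s',j')" by (cases b) auto
    have e2: "x = x'" "y = y'" "F s j = F s' j'" using e unfolding av bv \<phi>_def by auto
    have s1: "s \<ge> 1" "s' \<ge> 1" using a b t unfolding av bv Dom_def by auto
    have "s = s'" using level_unique[OF s1] mem[OF a[unfolded av]] mem[OF b[unfolded bv]] e2(3) by auto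
    hence "j = j'" using inj e2(3) by auto
    thus "a = b" unfolding av bv using e2 \<open>s = s'\<close> by simp
  qed
  moreover have "\<phi> ` Dom t \<subseteq> A" using mem unfolding \<phi>_def by auto
  ultimately have "card (Dom t) \<le> card A" using fin by (intro card_inj_on_le)
  thus ?thesis using card_Dom[OF t] by linarith
qed

definition box :: "nat \<Rightarrow> heis set" where
  "box n = {-int n..int n} \<times> {-int n..int n} \<times> {- ((int n)^2) .. (int n)^2}"

lemma ball_sub: "ball n \<subseteq> box n"
proof
  fix g assume g: "g \<in> ball n"
  obtain w where w: "reach g w" "length w = wlen g" using wlen_witness by blast
  have sw: "set w \<subseteq> hS" and ev: "word_eval w = g" using w(1) unfolding reach_def by auto
  have ln: "int (length w) \<le> int n" using g w(2) unfolding ball_def by simp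
  have B: "\<bar>WX w\<bar> + \<bar>WY w\<bar> \<le> int (length w)" "\<bar>WZ w\<bar> \<le> int (length w)^2" using basic[OF sw] by auto
  have "int (length w)^2 \<le> (int n)^2" using ln by (intro power_mono) auto
  hence "\<bar>WX w\<bar> \<le> int n" "\<bar>WY w\<bar> \<le> int n" "\<bar>WZ w\<bar> \<le> (int n)^2" using B ln by linarith+
  moreover have "g = (WX w, WY w, WZ w)" using ev we_split by metis
  ultimately show "g \<in> box n" unfolding box_def by (auto simp: abs_le_iff)
qed

lemma fin_ball: "finite (ball n)"
  by (rule finite_subset[OF ball_sub]) (simp add: box_def)

lemma card_ball: "n \<ge> 1 \<Longrightarrow> real (card (ball n)) \<le> 27 * real n ^ 4"
proof -
  assume n: "n \<ge> 1"
  have "card (ball n) \<le> card (box n)" using ball_sub by (intro card_mono) (auto simp: box_def)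
  moreover have "int (card (box n)) = (2 * int n + 1) * ((2 * int n + 1) * (2 * (int n)^2 + 1))"
    unfolding box_def by (simp add: card_cartesian_product)
  ultimately have c: "int (card (ball n)) \<le> (2 * int n + 1) * ((2 * int n + 1) * (2 * (int n)^2 + 1))" by linarith
  have "(2 * int n + 1) * ((2 * int n + 1) * (2 * (int n)^2 + 1)) \<le> (3 * int n) * ((3 * int n) * (3 * (int n)^2))"
    using n mult_mono[of 1 "int n" 1 "int n"] by (intro mult_mono) (auto simp: power2_eq_square)
  also have "\<dots> = 27 * (int n)^4" by (simp add: power4_eq_xxxx power2_eq_square algebra_simps)
  finally have "int (card (ball n)) \<le> 27 * (int n)^4" using c by linarith
  hence "real_of_int (int (card (ball n))) \<le> real_of_int (27 * (int n)^4)" by linarith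
  thus ?thesis by simp
qed

lemma ratio:
  fixes cX cY B K m :: real
  assumes "m \<le> cX" "m \<le> cY" "cX + cY \<le> B" "B \<le> K * m" "0 < m" "K \<ge> 1"
  shows "1 / (2 * K) < cX / B \<and> cX / B < 1 - 1 / (2 * K)"
proof -
  have B0: "B > 0" using assms by linarith
  have "m / B \<ge> 1 / K" using assms B0 by (simp add: field_simps)
  moreover have "cX / B \<ge> m / B" "cY / B \<ge> m / B" using assms B0 by (simp_all add: divide_right_mono)
  moreover have "cX / B + cY / B \<le> 1" using assms B0 by (simp add: field_simps)
  moreover have "1 / (2 * K) < 1 / K" using assms by (simp add: field_simps)
  ultimately show ?thesis by linarith
qed

lemma fam_intro: "(x,y,s,j) \<in> Dom t \<Longrightarrow> t \<ge> 2 \<Longrightarrow> fam t x y s j"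
  unfolding Dom_def fam_def by auto

lemma in_ball:
  assumes "(x,y,s,j) \<in> Dom t" "t \<ge> 2" "22 * t \<le> int n" "int (wlen (x,y,z)) \<le> 2 * s - x - y"
  shows "(x,y,z) \<in> ball n - {hone}"
proof -
  have "2 * s - x - y \<le> 22 * t - 2" using assms(1) unfolding Dom_def by auto
  hence "wlen (x,y,z) \<le> n" using assms by linarith
  moreover have "x \<noteq> 0" using assms(1,2) unfolding Dom_def by auto
  ultimately show ?thesis unfolding ball_def hone_def by auto
qed

lemma main_bounds:
  assumes n: "n \<ge> 484"
  defines "K \<equiv> 27 * 23^4 :: real"
  shows "\<forall>P \<in> {(\<lambda>k::real. k = 0), (\<lambda>k. k > 0), (\<lambda>k. k < 0)}.
        1 / (2 * K) < real (card {g \<in> ball n - {hone}. P (kappa g)}) / real (card (ball n)) \<and>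
        real (card {g \<in> ball n - {hone}. P (kappa g)}) / real (card (ball n)) < 1 - 1 / (2 * K)"
proof -
  define t where "t = int (n div 22)"
  have t22: "t \<ge> 22" unfolding t_def using n by simp
  have t2: "t \<ge> 2" using t22 by simp
  have tn: "22 * t \<le> int n" unfolding t_def by simp
  have nt: "int n \<le> 23 * t" unfolding t_def using n by simp
  define S0 where "S0 = {g \<in> ball n - {hone}. kappa g = 0}"
  define Sp where "Sp = {g \<in> ball n - {hone}. kappa g > 0}"
  define Sm where "Sm = {g \<in> ball n - {hone}. kappa g < 0}"
  have fins: "finite S0" "finite Sp" "finite Sm" unfolding S0_def Sp_def Sm_def using fin_ball by auto
  have c0: "real_of_int t ^ 4 \<le> real (card S0)"
  proof (rule count[OF fins(1) t2, of "zZ t"])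
    fix x y s j assume d: "(x,y,s,j) \<in> Dom t"
    interpret fam t x y s j by (rule fam_intro[OF d t2])
    show "(x,y,zZ t s j) \<in> S0 \<and> (s - 1)^2 < 4 * zZ t s j \<and> 4 * zZ t s j \<le> s^2"
      using Z in_ball[OF d t2 tn Z(1)] unfolding S0_def by auto
  qed (simp add: zZ_def)
  have cp: "real_of_int t ^ 4 \<le> real (card Sp)"
  proof (rule count[OF fins(2) t2, of "zP"])
    fix x y s j assume d: "(x,y,s,j) \<in> Dom t"
    interpret fam t x y s j by (rule fam_intro[OF d t2])
    show "(x,y,zP s j) \<in> Sp \<and> (s - 1)^2 < 4 * zP s j \<and> 4 * zP s j \<le> s^2"
      using P in_ball[OF d t2 tn P(1)] unfolding Sp_def by auto
  qed (simp add: zP_def)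
  have cm: "real_of_int t ^ 4 \<le> real (card Sm)"
  proof (rule count[OF fins(3) t2, of "zM"])
    fix x y s j assume d: "(x,y,s,j) \<in> Dom t"
    interpret fam t x y s j by (rule fam_intro[OF d t2])
    show "(x,y,zM s j) \<in> Sm \<and> (s - 1)^2 < 4 * zM s j \<and> 4 * zM s j \<le> s^2"
      using M in_ball[OF d t2 tn M(1)] unfolding Sm_def by auto
  qed (simp add: zM_def)
  have sub: "S0 \<subseteq> ball n" "Sp \<subseteq> ball n" "Sm \<subseteq> ball n" unfolding S0_def Sp_def Sm_def by auto
  have dj: "S0 \<inter> Sp = {}" "Sp \<inter> Sm = {}" "Sm \<inter> S0 = {}" unfolding S0_def Sp_def Sm_def by auto
  have u1: "card S0 + card Sp \<le> card (ball n)"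
    using card_Un_disjoint[OF fins(1,2) dj(1)] card_mono[OF fin_ball, of "S0 \<union> Sp"] sub by auto
  have u2: "card Sp + card Sm \<le> card (ball n)"
    using card_Un_disjoint[OF fins(2,3) dj(2)] card_mono[OF fin_ball, of "Sp \<union> Sm"] sub by auto
  have u3: "card Sm + card S0 \<le> card (ball n)"
    using card_Un_disjoint[OF fins(3,1) dj(3)] card_mono[OF fin_ball, of "Sm \<union> S0"] sub by auto
  have Bb: "real (card (ball n)) \<le> K * real_of_int t ^ 4"
  proof -
    have "real (card (ball n)) \<le> 27 * real n ^ 4" using card_ball n by simp
    moreover have "real n ^ 4 \<le> (23 * real_of_int t) ^ 4"
    proof (rule power_mono)
      show "real n \<le> 23 * real_of_int t" using nt by linarith
    qed simp
    ultimately show ?thesis unfolding K_def by (simp add: power_mult_distrib)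
  qed
  have m0: "0 < real_of_int t ^ 4" using t2 by simp
  have K1: "K \<ge> 1" unfolding K_def by simp
  have r0: "1 / (2 * K) < real (card S0) / real (card (ball n)) \<and> real (card S0) / real (card (ball n)) < 1 - 1 / (2 * K)"
    by (rule ratio[OF c0 cp _ Bb m0 K1]) (use u1 in linarith)
  have rp: "1 / (2 * K) < real (card Sp) / real (card (ball n)) \<and> real (card Sp) / real (card (ball n)) < 1 - 1 / (2 * K)"
    by (rule ratio[OF cp cm _ Bb m0 K1]) (use u2 in linarith)
  have rm: "1 / (2 * K) < real (card Sm) / real (card (ball n)) \<and> real (card Sm) / real (card (ball n)) < 1 - 1 / (2 * K)"
    by (rule ratio[OF cm c0 _ Bb m0 K1]) (use u3 in linarith)
  show ?thesis using r0 rp rm unfolding S0_def Sp_def Sm_def by simp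
qed

theorem mainTheorem6:
  shows "\<exists>\<epsilon>::real. \<epsilon> > 0 \<and> (\<exists>N::nat. \<forall>n\<ge>N.
     (\<forall>P \<in> {(\<lambda>k::real. k = 0), (\<lambda>k. k > 0), (\<lambda>k. k < 0)}.
        \<epsilon> < real (card {g \<in> ball n - {hone}. P (kappa g)}) / real (card (ball n)) \<and>
        real (card {g \<in> ball n - {hone}. P (kappa g)}) / real (card (ball n)) < 1 - \<epsilon>))"
proof (intro exI conjI allI impI)
  show "(0::real) < 1 / (2 * (27 * 23^4))" by simp
next
  fix n :: nat assume "484 \<le> n"
  thus "\<forall>P \<in> {(\<lambda>k::real. k = 0), (\<lambda>k. k > 0), (\<lambda>k. k < 0)}.
        1 / (2 * (27 * 23^4)) < real (card {g \<in> ball n - {hone}. P (kappa g)}) / real (card (ball n)) \<and>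
        real (card {g \<in> ball n - {hone}. P (kappa g)}) / real (card (ball n)) < 1 - 1 / (2 * (27 * 23^4))"
    by (rule main_bounds)
qed

end
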